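(* Let $a,b\in\mathbb{C}$ and let $E:\mathscr{A}(\mathbb{R})\to\mathscr{A}(\mathbb{R})$ be the first order Euler differential operator $Ef(x)=axf'(x)+bf(x)$. Then $E$ generates a $C_0$-semigroup on $\mathscr{A}(\mathbb{R})$ if and only if $a\in\mathbb{R}$.
   Context: $\mathscr{A}(\mathbb{R})$ denotes the space of real analytic functions on $\mathbb{R}$ with the inductive limit topology $\operatorname{ind}_{U\supset\mathbb{R}}H(U)$ ($U$ complex open neighbourhoods of $\mathbb{R}$, $H(U)$ with compact-open topology). A $C_0$-semigroup is a family $(T_t)_{t\ge0}$ of continuous linear operators on $\mathscr{A}(\mathbb{R})$ with $T_tT_s=T_{t+s}$, $T_0=I$, and $t\mapsto T_tf$ continuous for each $f$; its generator is $Af=\lim_{t\to0^+}(T_tf-f)/t$ on the domain where the limit exists; "$E$ generates" means $E$ (with domain $\mathscr{A}(\mathbb{R})$) is the generator. *)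

theory Defs
  imports "HOL-Analysis.Analysis"
begin

definition real_analytic_fun :: "(real \<Rightarrow> complex) \<Rightarrow> bool" where
  "real_analytic_fun f \<longleftrightarrow>
     (\<exists>U g. open U \<and> range complex_of_real \<subseteq> U \<and> g holomorphic_on U \<and>
            (\<forall>x. g (complex_of_real x) = f x))"

definition AR :: "(real \<Rightarrow> complex) set" where
  "AR = {f. real_analytic_fun f}"

text \<open>Zero neighbourhoods of the locally convex inductive limit topology
ind_{U} H(U): absolutely convex subsets V of A(R) whose preimage under the
restriction map H(U) -> A(R) is a zero neighbourhood of H(U) (compact-open
topology) for every open U containing the real axis.\<close>

definition AR_zero_nbhd :: "(real \<Rightarrow> complex) set \<Rightarrow> bool" where
  "AR_zero_nbhd V \<longleftrightarrow>
     V \<subseteq> AR \<and>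
     (\<forall>f\<in>V. \<forall>g\<in>V. \<forall>u::real. 0 \<le> u \<and> u \<le> 1 \<longrightarrow>
         (\<lambda>x. complex_of_real u * f x + complex_of_real (1 - u) * g x) \<in> V) \<and>
     (\<forall>f\<in>V. \<forall>c::complex. cmod c \<le> 1 \<longrightarrow> (\<lambda>x. c * f x) \<in> V) \<and>
     (\<forall>U. open U \<and> range complex_of_real \<subseteq> U \<longrightarrow>
        (\<exists>K \<epsilon>. compact K \<and> K \<subseteq> U \<and> \<epsilon> > 0 \<and>
           (\<forall>g. g holomorphic_on U \<and> (\<forall>z\<in>K. cmod (g z) < \<epsilon>) \<longrightarrow>
                 (\<lambda>x. g (complex_of_real x)) \<in> V)))"

text \<open>Convergence in A(R) along a filter (the sets L + V form a neighbourhood base at L).\<close>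

definition AR_tendsto :: "('b \<Rightarrow> real \<Rightarrow> complex) \<Rightarrow> (real \<Rightarrow> complex) \<Rightarrow> 'b filter \<Rightarrow> bool" where
  "AR_tendsto F L net \<longleftrightarrow>
     (\<forall>V. AR_zero_nbhd V \<longrightarrow> eventually (\<lambda>t. (\<lambda>x. F t x - L x) \<in> V) net)"

definition AR_continuous_linear :: "((real \<Rightarrow> complex) \<Rightarrow> (real \<Rightarrow> complex)) \<Rightarrow> bool" where
  "AR_continuous_linear T \<longleftrightarrow>
     (\<forall>f\<in>AR. T f \<in> AR) \<and>
     (\<forall>f\<in>AR. \<forall>g\<in>AR. T (\<lambda>x. f x + g x) = (\<lambda>x. T f x + T g x)) \<and>
     (\<forall>f\<in>AR. \<forall>c::complex. T (\<lambda>x. c * f x) = (\<lambda>x. c * T f x)) \<and>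
     (\<forall>f\<in>AR. \<forall>V. AR_zero_nbhd V \<longrightarrow>
        (\<exists>W. AR_zero_nbhd W \<and> (\<forall>h\<in>W. (\<lambda>x. T (\<lambda>y. f y + h y) x - T f x) \<in> V)))"

definition C0_semigroup :: "(real \<Rightarrow> (real \<Rightarrow> complex) \<Rightarrow> (real \<Rightarrow> complex)) \<Rightarrow> bool" where
  "C0_semigroup T \<longleftrightarrow>
     (\<forall>t\<ge>0. AR_continuous_linear (T t)) \<and>
     (\<forall>t\<ge>0. \<forall>s\<ge>0. \<forall>f\<in>AR. T t (T s f) = T (t + s) f) \<and>
     (\<forall>f\<in>AR. T 0 f = f) \<and>
     (\<forall>f\<in>AR. \<forall>t0\<ge>0. AR_tendsto (\<lambda>t. T t f) (T t0 f) (at t0 within {0..}))"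

text \<open>The generator of T has domain A(R) and equals E there: for every f in A(R)
the limit of (T_t f - f)/t as t -> 0+ exists in A(R) and equals E f.\<close>

definition generates_C0 :: "((real \<Rightarrow> complex) \<Rightarrow> (real \<Rightarrow> complex)) \<Rightarrow> bool" where
  "generates_C0 E \<longleftrightarrow>
     (\<exists>T. C0_semigroup T \<and>
        (\<forall>f\<in>AR. AR_tendsto (\<lambda>t. (\<lambda>x. (T t f x - f x) / complex_of_real t)) (E f) (at_right 0)))"

definition euler_op :: "complex \<Rightarrow> complex \<Rightarrow> (real \<Rightarrow> complex) \<Rightarrow> (real \<Rightarrow> complex)" where
  "euler_op a b f = (\<lambda>x. a * complex_of_real x * vector_derivative f (at x) + b * f x)"

end

theory Submission
  imports Defs "HOL-Complex_Analysis.Cauchy_Integral_Formula"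
begin



lemma AR_holo:
  assumes "open U" "range complex_of_real \<subseteq> U" "g holomorphic_on U"
  shows "(\<lambda>x. g (complex_of_real x)) \<in> AR"
  using assms unfolding AR_def real_analytic_fun_def by blast

lemma AR_E:
  assumes "f \<in> AR"
  obtains U g where "open U" "range complex_of_real \<subseteq> U" "g holomorphic_on U"
     "\<And>x. g (complex_of_real x) = f x"
  using assms unfolding AR_def real_analytic_fun_def by blast

lemma AR_add:
  assumes "f \<in> AR" "g \<in> AR" shows "(\<lambda>x. f x + g x) \<in> AR"
proof -
  obtain U1 g1 where 1: "open U1" "range complex_of_real \<subseteq> U1" "g1 holomorphic_on U1"
     "\<And>x. g1 (complex_of_real x) = f x" using AR_E[OF assms(1)] by metis
  obtain U2 g2 where 2: "open U2" "range complex_of_real \<subseteq> U2" "g2 holomorphic_on U2"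
     "\<And>x. g2 (complex_of_real x) = g x" using AR_E[OF assms(2)] by metis
  have "(\<lambda>x. (\<lambda>z. g1 z + g2 z) (complex_of_real x)) \<in> AR"
    apply (rule AR_holo[of "U1 \<inter> U2"])
    using 1 2 by (auto intro!: holomorphic_intros elim: holomorphic_on_subset)
  then show ?thesis using 1 2 by simp
qed

lemma AR_cmult:
  assumes "f \<in> AR" shows "(\<lambda>x. c * f x) \<in> AR"
proof -
  obtain U1 g1 where 1: "open U1" "range complex_of_real \<subseteq> U1" "g1 holomorphic_on U1"
     "\<And>x. g1 (complex_of_real x) = f x" using AR_E[OF assms(1)] by metis
  have "(\<lambda>x. (\<lambda>z. c * g1 z) (complex_of_real x)) \<in> AR"
    apply (rule AR_holo[of "U1"])
    using 1 by (auto intro!: holomorphic_intros)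
  then show ?thesis using 1 by simp
qed

lemma AR_entire:
  assumes "g holomorphic_on UNIV" shows "(\<lambda>x. g (complex_of_real x)) \<in> AR"
  using assms by (intro AR_holo[of UNIV]) auto

lemma eval_nbhd:
  assumes "e > 0"
  shows "AR_zero_nbhd {f\<in>AR. cmod (f x0) < e}"
  unfolding AR_zero_nbhd_def
proof (intro conjI ballI allI impI)
  fix f g and u::real assume f: "f \<in> {f \<in> AR. cmod (f x0) < e}" and g: "g \<in> {f \<in> AR. cmod (f x0) < e}"
    and u: "0 \<le> u \<and> u \<le> 1"
  have "cmod (complex_of_real u * f x0 + complex_of_real (1 - u) * g x0)
       \<le> u * cmod (f x0) + (1 - u) * cmod (g x0)"
    using u by (smt (verit) norm_mult norm_of_real norm_triangle_ineq)
  also have "\<dots> \<le> u * max (cmod (f x0)) (cmod (g x0)) + (1 - u) * max (cmod (f x0)) (cmod (g x0))"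
    using u by (intro add_mono mult_left_mono) auto
  also have "\<dots> < e" using f g by (simp add: algebra_simps)
  finally show "(\<lambda>x. complex_of_real u * f x + complex_of_real (1 - u) * g x) \<in> {f \<in> AR. cmod (f x0) < e}"
    using f g by (auto intro!: AR_add AR_cmult)
next
  fix f c assume f: "f \<in> {f \<in> AR. cmod (f x0) < e}" and c: "cmod (c::complex) \<le> 1"
  have "cmod (c * f x0) \<le> cmod (f x0)" using c
    by (simp add: norm_mult mult_left_le_one_le)
  then show "(\<lambda>x. c * f x) \<in> {f \<in> AR. cmod (f x0) < e}" using f by (auto intro!: AR_cmult)
next
  fix U :: "complex set" assume U: "open U \<and> range complex_of_real \<subseteq> U"
  show "\<exists>K \<epsilon>. compact K \<and> K \<subseteq> U \<and> 0 < \<epsilon> \<and>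
              (\<forall>g. g holomorphic_on U \<and> (\<forall>z\<in>K. cmod (g z) < \<epsilon>) \<longrightarrow>
                   (\<lambda>x. g (complex_of_real x)) \<in> {f \<in> AR. cmod (f x0) < e})"
    apply (rule exI[of _ "{complex_of_real x0}"], rule exI[of _ e])
    using U assms by (auto intro: AR_holo)
qed auto




lemma rquot_to_vderiv:
  fixes \<phi> :: "real \<Rightarrow> complex"
  assumes "((\<lambda>h. (\<phi> (s+h) - \<phi> s) / complex_of_real h) \<longlongrightarrow> D) (at_right 0)"
  shows "(\<phi> has_vector_derivative D) (at s within {s..})"
proof -
  have "((\<lambda>h. (\<phi> (s+h) - \<phi> s) / complex_of_real h - D) \<longlongrightarrow> D - D) (at_right 0)"
    by (intro tendsto_intros assms)
  then have 1: "((\<lambda>h. (\<phi> (s+h) - \<phi> s) / complex_of_real h - D) \<longlongrightarrow> 0) (at_right 0)" by simp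
  have ev: "eventually (\<lambda>h. (\<phi> (s+h) - \<phi> s) / complex_of_real h - D =
      (\<phi> (h + s) - \<phi> s - h *\<^sub>R D) /\<^sub>R norm (h + s - s)) (at_right (0::real))"
    unfolding eventually_at_right_less
  proof (rule eventually_mono[OF eventually_at_right_less])
    fix h :: real assume h: "0 < h"
    then show "(\<phi> (s+h) - \<phi> s) / complex_of_real h - D =
      (\<phi> (h + s) - \<phi> s - h *\<^sub>R D) /\<^sub>R norm (h + s - s)"
      by (simp add: scaleR_conv_of_real field_simps add.commute)
  qed
  have 2: "((\<lambda>h. (\<phi> (h + s) - \<phi> s - h *\<^sub>R D) /\<^sub>R norm (h + s - s)) \<longlongrightarrow> 0) (at_right 0)"
    using Lim_transform_eventually[OF 1 ev] .
  have "((\<lambda>y. (\<phi> y - \<phi> s - (y - s) *\<^sub>R D) /\<^sub>R norm (y - s)) \<longlongrightarrow> 0) (at_right s)"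
    unfolding at_right_to_0[of s] filterlim_filtermap using 2 by (simp add: o_def)
  then show ?thesis
    unfolding has_vector_derivative_def has_derivative_at_within at_within_Ici_at_right
    by (auto intro: bounded_linear_scaleR_left)
qed




lemma rzero_const:
  fixes g :: "real \<Rightarrow> complex"
  assumes ab: "a \<le> b" and cont: "continuous_on {a..b} g"
    and der: "\<And>s. a \<le> s \<Longrightarrow> s < b \<Longrightarrow> (g has_vector_derivative 0) (at s within {s..})"
  shows "g b = g a"
proof -
  have main: "norm (g b - g a) \<le> e * (b - a)" if e: "e > 0" for e
  proof -
    define C where "C = {r\<in>{a..b}. norm (g r - g a) - e * (r - a) \<in> {..0}}"
    have "continuous_on {a..b} (\<lambda>r. norm (g r - g a) - e * (r - a))"
      by (intro continuous_intros cont)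
    then have clC: "closed C" unfolding C_def
      using continuous_closed_preimage[of "{a..b}" "\<lambda>r. norm (g r - g a) - e * (r - a)" "{..0}"]
      by (auto simp: vimage_def Int_def)
    have Cchar: "r \<in> C \<longleftrightarrow> a \<le> r \<and> r \<le> b \<and> norm (g r - g a) \<le> e * (r - a)" for r
      by (auto simp: C_def)
    define B where "B = {s\<in>{a..b}. {a..s} \<subseteq> C}"
    have aB: "a \<in> B" using ab by (auto simp: B_def Cchar)
    have bdd: "bdd_above B" by (auto simp: B_def bdd_above_def)
    define \<sigma> where "\<sigma> = Sup B"
    have s1: "a \<le> \<sigma>" unfolding \<sigma>_def using aB bdd by (rule cSup_upper)
    have s2: "\<sigma> \<le> b" unfolding \<sigma>_def using aB by (intro cSup_least) (auto simp: B_def)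
    have lt: "{a..<\<sigma>} \<subseteq> C"
    proof
      fix r assume r: "r \<in> {a..<\<sigma>}"
      then obtain s where "s \<in> B" "r < s" using less_cSup_iff[of B r] aB bdd
        by (auto simp: \<sigma>_def)
      then show "r \<in> C" using r by (auto simp: B_def)
    qed
    have sC: "\<sigma> \<in> C"
    proof (cases "\<sigma> = a")
      case True then show ?thesis using aB by (auto simp: B_def)
    next
      case False
      then have "closure {a..<\<sigma>} = {a..\<sigma>}" using s1 by (intro closure_atLeastLessThan) auto
      then have "{a..\<sigma>} \<subseteq> C" using closure_minimal[OF lt clC] by simp
      then show ?thesis using s1 by auto
    qed
    have sB: "{a..\<sigma>} \<subseteq> C"
    proof
      fix r assume "r \<in> {a..\<sigma>}"
      then show "r \<in> C" using lt sC by (cases "r = \<sigma>") auto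
    qed
    have "\<sigma> = b"
    proof (rule ccontr)
      assume "\<sigma> \<noteq> b" then have sb: "\<sigma> < b" using s2 by auto
      have "(g has_derivative (\<lambda>h. h *\<^sub>R 0)) (at \<sigma> within {\<sigma>..})"
        using der[OF s1 sb] by (simp add: has_vector_derivative_def)
      then obtain d where d: "d > 0" and dd: "\<And>y. y \<in> {\<sigma>..} \<Longrightarrow> norm (y - \<sigma>) < d \<Longrightarrow>
          norm (g y - g \<sigma> - (y - \<sigma>) *\<^sub>R 0) \<le> e * norm (y - \<sigma>)"
        unfolding has_derivative_within_alt using e by blast
      define s' where "s' = min b (\<sigma> + d/2)"
      have s'gt: "s' > \<sigma>" using sb d by (auto simp: s'_def)
      have "{a..s'} \<subseteq> C"
      proof
        fix r assume r: "r \<in> {a..s'}"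
        show "r \<in> C"
        proof (cases "r \<le> \<sigma>")
          case True then show ?thesis using sB r by auto
        next
          case False
          have "norm (g r - g \<sigma>) \<le> e * (r - \<sigma>)"
            using dd[of r] False r d by (auto simp: s'_def)
          moreover have "norm (g \<sigma> - g a) \<le> e * (\<sigma> - a)" using sC Cchar by auto
          ultimately have "norm (g r - g a) \<le> e * (r - a)"
            using norm_triangle_ineq[of "g r - g \<sigma>" "g \<sigma> - g a"] by (simp add: algebra_simps)
          then show ?thesis using r s1 False by (auto simp: Cchar s'_def)
        qed
      qed
      then have "s' \<in> B" using s1 s'gt by (auto simp: B_def s'_def)
      then have "s' \<le> \<sigma>" unfolding \<sigma>_def using bdd by (rule cSup_upper)
      then show False using s'gt by simp
    qed
    then show ?thesis using sC Cchar by auto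
  qed
  show ?thesis
  proof (rule ccontr)
    assume ne: "g b \<noteq> g a"
    then have np: "norm (g b - g a) > 0" by simp
    define e where "e = norm (g b - g a) / (b - a + 1)"
    have e: "e > 0" using np ab by (simp add: e_def)
    have "norm (g b - g a) \<le> e * (b - a)" using main[OF e] .
    also have "\<dots> < norm (g b - g a)" using np ab
      by (simp add: e_def field_simps)
    finally show False by simp
  qed
qed

lemma rexp_unique:
  fixes \<phi> :: "real \<Rightarrow> complex"
  assumes t: "t \<ge> 0" and cont: "continuous_on {0..t} \<phi>"
    and der: "\<And>s. 0 \<le> s \<Longrightarrow> s < t \<Longrightarrow> (\<phi> has_vector_derivative c * \<phi> s) (at s within {s..})"
  shows "\<phi> t = exp (c * complex_of_real t) * \<phi> 0"
proof -
  define \<psi> where "\<psi> s = exp (- c * complex_of_real s) * \<phi> s" for s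
  have "\<psi> t = \<psi> 0"
  proof (rule rzero_const[OF t])
    show "continuous_on {0..t} \<psi>" unfolding \<psi>_def
      by (intro continuous_intros cont)
    fix s assume s: "0 \<le> s" "s < t"
    have e: "((\<lambda>s. exp (- c * complex_of_real s)) has_vector_derivative (- c * exp (- c * complex_of_real s))) (at s within {s..})"
    proof -
      have "((\<lambda>z. exp (- c * z)) has_field_derivative (- c * exp (- c * complex_of_real s))) (at (complex_of_real s))"
        by (auto intro!: derivative_eq_intros)
      from has_vector_derivative_real_field[OF this] show ?thesis .
    qed
    have "(\<psi> has_vector_derivative (exp (- c * complex_of_real s) * (c * \<phi> s) + (- c * exp (- c * complex_of_real s)) * \<phi> s)) (at s within {s..})"
      unfolding \<psi>_def by (rule has_vector_derivative_mult[OF e der[OF s]])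
    then show "(\<psi> has_vector_derivative 0) (at s within {s..})"
      by (simp add: algebra_simps)
  qed
  then have "exp (- c * complex_of_real t) * \<phi> t = \<phi> 0" by (simp add: \<psi>_def)
  then have "exp (c * complex_of_real t) * (exp (- c * complex_of_real t) * \<phi> t) = exp (c * complex_of_real t) * \<phi> 0" by simp
  then show ?thesis by (simp add: mult.assoc[symmetric] exp_add[symmetric])
qed




lemma AR_tendsto_pointwise:
  assumes "AR_tendsto F L net"
  shows "((\<lambda>t. F t x0) \<longlongrightarrow> L x0) net"
proof (rule tendstoI)
  fix e :: real assume e: "e > 0"
  have "eventually (\<lambda>t. (\<lambda>x. F t x - L x) \<in> {f\<in>AR. cmod (f x0) < e}) net"
    using assms eval_nbhd[OF e] unfolding AR_tendsto_def by blast
  then show "eventually (\<lambda>t. dist (F t x0) (L x0) < e) net"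
    by (rule eventually_mono) (auto simp: dist_norm)
qed

lemma euler_mono:
  "euler_op a b (\<lambda>x. complex_of_real x ^ n) = (\<lambda>x. (a * of_nat n + b) * complex_of_real x ^ n)"
proof
  fix x :: real
  have "((\<lambda>z::complex. z ^ n) has_field_derivative (of_nat n * complex_of_real x ^ (n - 1))) (at (complex_of_real x))"
    by (rule derivative_eq_intros refl)+ simp
  from has_vector_derivative_real_field[OF this]
  have "vector_derivative (\<lambda>x. complex_of_real x ^ n) (at x) = of_nat n * complex_of_real x ^ (n - 1)"
    by (intro vector_derivative_at) simp
  moreover have "complex_of_real x * (of_nat n * complex_of_real x ^ (n - 1)) = of_nat n * complex_of_real x ^ n"
    by (cases n) auto
  ultimately show "euler_op a b (\<lambda>x. complex_of_real x ^ n) x = (a * of_nat n + b) * complex_of_real x ^ n"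
    unfolding euler_op_def by (simp add: algebra_simps)
qed

context
  fixes T :: "real \<Rightarrow> (real \<Rightarrow> complex) \<Rightarrow> (real \<Rightarrow> complex)" and a b :: complex
  assumes C0: "C0_semigroup T"
    and gen: "\<forall>f\<in>AR. AR_tendsto (\<lambda>t. (\<lambda>x. (T t f x - f x) / complex_of_real t)) (euler_op a b f) (at_right 0)"
begin

lemma T_cl: "t \<ge> 0 \<Longrightarrow> AR_continuous_linear (T t)"
  using C0 unfolding C0_semigroup_def by blast

lemma T_AR: "t \<ge> 0 \<Longrightarrow> f \<in> AR \<Longrightarrow> T t f \<in> AR"
  using T_cl unfolding AR_continuous_linear_def by blast

lemma T_add: "t \<ge> 0 \<Longrightarrow> f \<in> AR \<Longrightarrow> g \<in> AR \<Longrightarrow> T t (\<lambda>x. f x + g x) = (\<lambda>x. T t f x + T t g x)"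
  using T_cl unfolding AR_continuous_linear_def by blast

lemma T_cmult: "t \<ge> 0 \<Longrightarrow> f \<in> AR \<Longrightarrow> T t (\<lambda>x. c * f x) = (\<lambda>x. c * T t f x)"
  using T_cl unfolding AR_continuous_linear_def by blast

lemma T_lin2: "t \<ge> 0 \<Longrightarrow> f \<in> AR \<Longrightarrow> g \<in> AR \<Longrightarrow>
   T t (\<lambda>x. \<alpha> * f x + \<beta> * g x) = (\<lambda>x. \<alpha> * T t f x + \<beta> * T t g x)"
  by (simp add: T_add T_cmult AR_cmult)

lemma T_semi: "t \<ge> 0 \<Longrightarrow> s \<ge> 0 \<Longrightarrow> f \<in> AR \<Longrightarrow> T t (T s f) = T (t + s) f"
  using C0 unfolding C0_semigroup_def by blast

lemma T_0: "f \<in> AR \<Longrightarrow> T 0 f = f"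
  using C0 unfolding C0_semigroup_def by blast

lemma T_cont_t: "f \<in> AR \<Longrightarrow> t0 \<ge> 0 \<Longrightarrow> AR_tendsto (\<lambda>t. T t f) (T t0 f) (at t0 within {0..})"
  using C0 unfolding C0_semigroup_def by blast

lemma T_cont: 
  assumes t: "t \<ge> 0" and L: "L \<in> AR" and F: "AR_tendsto F L net"
  shows "AR_tendsto (\<lambda>s. T t (F s)) (T t L) net"
  unfolding AR_tendsto_def
proof (intro allI impI)
  fix V assume V: "AR_zero_nbhd V"
  obtain W where W: "AR_zero_nbhd W" and WV: "\<And>h. h \<in> W \<Longrightarrow> (\<lambda>x. T t (\<lambda>y. L y + h y) x - T t L x) \<in> V"
    using T_cl[OF t] L V unfolding AR_continuous_linear_def by metis
  have "eventually (\<lambda>s. (\<lambda>x. F s x - L x) \<in> W) net" using F W unfolding AR_tendsto_def by blast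
  then show "eventually (\<lambda>s. (\<lambda>x. T t (F s) x - T t L x) \<in> V) net"
    by (rule eventually_mono) (drule WV, simp)
qed

lemma mono_AR: "(\<lambda>x. complex_of_real x ^ n) \<in> AR"
  by (rule AR_entire[of "\<lambda>z. z ^ n", simplified]) (auto intro: holomorphic_intros)

lemma mono_rderiv:
  fixes n :: nat
  assumes s: "s \<ge> 0"
  defines "p \<equiv> (\<lambda>x. complex_of_real x ^ n)"
  shows "((\<lambda>h. (T (s+h) p x0 - T s p x0) / complex_of_real h) \<longlongrightarrow> (a * of_nat n + b) * T s p x0) (at_right 0)"
proof -
  have pAR: "p \<in> AR" unfolding p_def by (rule mono_AR)
  have Ep: "euler_op a b p = (\<lambda>x. (a * of_nat n + b) * p x)" unfolding p_def by (rule euler_mono)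
  have "AR_tendsto (\<lambda>h. T s (\<lambda>x. (T h p x - p x) / complex_of_real h)) (T s (euler_op a b p)) (at_right 0)"
    using T_cont[OF s _ gen[rule_format, OF pAR]] Ep pAR by (simp add: AR_cmult)
  from AR_tendsto_pointwise[OF this, of x0]
  have 1: "((\<lambda>h. T s (\<lambda>x. (T h p x - p x) / complex_of_real h) x0) \<longlongrightarrow> (a * of_nat n + b) * T s p x0) (at_right 0)"
    using Ep T_cmult[OF s pAR] by simp
  have ev: "eventually (\<lambda>h. T s (\<lambda>x. (T h p x - p x) / complex_of_real h) x0 =
        (T (s+h) p x0 - T s p x0) / complex_of_real h) (at_right (0::real))"
  proof (rule eventually_mono[OF eventually_at_right_less])
    fix h :: real assume h: "0 < h"
    have e1: "(\<lambda>x. (T h p x - p x) / complex_of_real h) = (\<lambda>x. (1 / complex_of_real h) * T h p x + (- 1 / complex_of_real h) * p x)"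
      by (auto simp: diff_divide_distrib)
    have e2: "T s (\<lambda>x. (1 / complex_of_real h) * T h p x + (- 1 / complex_of_real h) * p x) = 
       (\<lambda>x. (1 / complex_of_real h) * T s (T h p) x + (- 1 / complex_of_real h) * T s p x)"
      by (rule T_lin2[OF s T_AR[OF _ pAR] pAR]) (use h in simp)
    have e3: "T s (T h p) = T (s + h) p" using T_semi[OF s _ pAR] h by simp
    show "T s (\<lambda>x. (T h p x - p x) / complex_of_real h) x0 = (T (s+h) p x0 - T s p x0) / complex_of_real h"
      unfolding e1 e2 e3 by (simp add: diff_divide_distrib)
  qed
  show ?thesis using Lim_transform_eventually[OF 1 ev] .
qed

lemma T_mono:
  assumes t: "t \<ge> 0"
  shows "T t (\<lambda>x. complex_of_real x ^ n) x0 = exp ((a * of_nat n + b) * complex_of_real t) * complex_of_real x0 ^ n"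
proof -
  define p where "p = (\<lambda>x. complex_of_real x ^ n)"
  have pAR: "p \<in> AR" unfolding p_def by (rule mono_AR)
  define \<phi> where "\<phi> s = T s p x0" for s
  have cont: "continuous_on {0..t} \<phi>"
  proof -
    have "continuous_on {0..} \<phi>"
      unfolding continuous_on_def \<phi>_def
      using AR_tendsto_pointwise[OF T_cont_t[OF pAR]] by auto
    then show ?thesis by (rule continuous_on_subset) auto
  qed
  have "\<phi> t = exp ((a * of_nat n + b) * complex_of_real t) * \<phi> 0"
    using t cont
  proof (rule rexp_unique)
    fix s assume "0 \<le> s" "s < t"
    then show "(\<phi> has_vector_derivative (a * of_nat n + b) * \<phi> s) (at s within {s..})"
      unfolding \<phi>_def p_def by (intro rquot_to_vderiv mono_rderiv) 
  qed
  then show ?thesis using T_0[OF pAR] by (simp add: \<phi>_def p_def)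
qed


lemma T_zero: "t \<ge> 0 \<Longrightarrow> T t (\<lambda>x. 0) = (\<lambda>x. 0)"
  using T_cmult[of t "\<lambda>x. complex_of_real x ^ 0" 0] mono_AR[of 0] by simp

lemma sum_AR: "(\<lambda>x. \<Sum>k\<in>S. c k * complex_of_real x ^ m k) \<in> AR"
  by (rule AR_entire[of "\<lambda>z. \<Sum>k\<in>S. c k * z ^ m k", simplified]) (auto intro!: holomorphic_intros)

lemma T_sum:
  assumes t: "t \<ge> 0" and S: "finite S"
  shows "T t (\<lambda>x. \<Sum>k\<in>S. c k * complex_of_real x ^ m k) x0 =
     exp (b * complex_of_real t) * (\<Sum>k\<in>S. c k * (exp (a * complex_of_real t) * complex_of_real x0) ^ m k)"
  using S
proof (induction S rule: finite_induct)
  case empty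
  then show ?case using T_zero[OF t] by simp
next
  case (insert k S)
  have "T t (\<lambda>x. \<Sum>k\<in>insert k S. c k * complex_of_real x ^ m k) =
        T t (\<lambda>x. c k * complex_of_real x ^ m k + (\<Sum>k\<in>S. c k * complex_of_real x ^ m k))"
    using insert by simp
  also have "\<dots> = (\<lambda>x. T t (\<lambda>x. c k * complex_of_real x ^ m k) x + T t (\<lambda>x. \<Sum>k\<in>S. c k * complex_of_real x ^ m k) x)"
    by (rule T_add[OF t AR_cmult[OF mono_AR] sum_AR])
  finally have "T t (\<lambda>x. \<Sum>k\<in>insert k S. c k * complex_of_real x ^ m k) x0 = 
     c k * T t (\<lambda>x. complex_of_real x ^ m k) x0 + T t (\<lambda>x. \<Sum>k\<in>S. c k * complex_of_real x ^ m k) x0"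
    using T_cmult[OF t mono_AR] by simp
  also have "T t (\<lambda>x. complex_of_real x ^ m k) x0 = exp (b * complex_of_real t) * (exp (a * complex_of_real t) * complex_of_real x0) ^ m k"
  proof -
    have "(a * of_nat (m k) + b) * complex_of_real t = b * complex_of_real t + of_nat (m k) * (a * complex_of_real t)"
      by (simp add: algebra_simps)
    then show ?thesis unfolding T_mono[OF t]
      by (simp add: exp_add exp_of_nat_mult power_mult_distrib)
  qed
  finally show ?case using insert by (simp add: algebra_simps sum_distrib_left)
qed

lemma T_quad:
  assumes t: "t \<ge> 0"
  shows "T t (\<lambda>x. (A + B * complex_of_real x ^ 2) ^ n) x0 =
     exp (b * complex_of_real t) * (A + B * (exp (a * complex_of_real t) * complex_of_real x0) ^ 2) ^ n"
proof -
  have eq: "(A + B * z ^ 2) ^ n = (\<Sum>k\<le>n. (of_nat (n choose k) * B ^ k * A ^ (n - k)) * z ^ (2 * k))" for z :: complex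
    by (subst add.commute, subst binomial_ring) (simp add: power_mult_distrib power_mult[symmetric] algebra_simps)
  show ?thesis unfolding eq using T_sum[OF t, of "{..n}"] by simp
qed

end



lemma key_ineq:
  fixes z :: complex and N M :: real
  assumes y: "\<bar>Im z\<bar> < 1/2" and zM: "cmod (1 + z^2) \<le> M" and N: "N \<ge> 2 * M^2 + 1"
  shows "cmod (1 - (1 + z^2) / complex_of_real N) ^ 2 \<le> 1 - 1 / N"
proof -
  define u where "u = 1 + z^2"
  have i2: "Im z ^ 2 < (1/2)^2"
    using power_strict_mono[of "\<bar>Im z\<bar>" "1/2" 2] y by simp
  have "Re u = 1 + Re z ^ 2 - Im z ^ 2" unfolding u_def by (simp add: power2_eq_square)
  then have pRe: "Re u \<ge> 3/4" using i2 by (simp add: power2_eq_square) (smt (verit) zero_le_square)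
  have Mnn: "M \<ge> 0" using zM norm_ge_zero order_trans by blast
  have Np: "N > 0" using N by (smt (verit) zero_le_power2)
  have uu: "Re u ^ 2 + Im u ^ 2 \<le> N / 2"
  proof -
    have "Re u ^ 2 + Im u ^ 2 = cmod u ^ 2" by (simp add: cmod_power2)
    also have "\<dots> \<le> M ^ 2" using zM unfolding u_def by (intro power_mono) auto
    finally show ?thesis using N by simp
  qed
  have "cmod (1 - u / complex_of_real N) ^ 2 = (1 - Re u / N) ^ 2 + (Im u / N) ^ 2"
    by (simp add: cmod_power2 Re_divide_of_real Im_divide_of_real)
  also have "\<dots> = 1 - 2 * Re u / N + (Re u ^ 2 + Im u ^ 2) / N^2"
    using Np by (simp add: field_simps power2_eq_square)
  also have "\<dots> \<le> 1 - 2 * (3/4) / N + (N/2) / N^2"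
    using pRe uu Np by (intro add_mono diff_mono divide_right_mono divide_left_mono mult_left_mono) auto
  also have "\<dots> = 1 - 1 / N" using Np by (simp add: field_simps power2_eq_square)
  finally show ?thesis unfolding u_def .
qed


lemma exp_sq_imag:
  fixes a :: complex
  assumes "Im a \<noteq> 0"
  defines "t \<equiv> pi / (2 * \<bar>Im a\<bar>)"
  shows "exp (a * complex_of_real t) ^ 2 = - complex_of_real (exp (2 * Re a * t))"
proof -
  have "exp (a * complex_of_real t) ^ 2 = exp (2 * (a * complex_of_real t))"
    using exp_of_nat_mult[of 2 "a * complex_of_real t"] by simp
  also have "\<dots> = complex_of_real (exp (2 * Re a * t)) * cis (2 * Im a * t)"
    by (subst exp_eq_polar) (simp add: mult.assoc)
  also have "2 * Im a * t = (if Im a > 0 then pi else - pi)"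
    using assms by (auto simp: t_def field_simps)
  also have "cis (if Im a > 0 then pi else - pi) = -1" by (auto simp: complex_eq_iff)
  finally show ?thesis by simp
qed

context
  fixes T :: "real \<Rightarrow> (real \<Rightarrow> complex) \<Rightarrow> (real \<Rightarrow> complex)" and a b :: complex
  assumes C0: "C0_semigroup T"
    and gen: "\<forall>f\<in>AR. AR_tendsto (\<lambda>t. (\<lambda>x. (T t f x - f x) / complex_of_real t)) (euler_op a b f) (at_right 0)"
begin

lemma not_real_False:
  assumes "a \<notin> \<real>" shows False
proof -
  have ia: "Im a \<noteq> 0" using assms complex_is_Real_iff by blast
  define t where "t = pi / (2 * \<bar>Im a\<bar>)"
  have t: "t \<ge> 0" using ia by (simp add: t_def)
  define x0 where "x0 = sqrt 2 * exp (- Re a * t)"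
  have w2: "(exp (a * complex_of_real t) * complex_of_real x0) ^ 2 = - 2"
  proof -
    have "(exp (a * complex_of_real t) * complex_of_real x0) ^ 2 =
       exp (a * complex_of_real t) ^ 2 * complex_of_real (x0 ^ 2)" by (simp add: power_mult_distrib)
    also have "\<dots> = - complex_of_real (exp (2 * Re a * t) * x0 ^ 2)"
      using exp_sq_imag[OF ia] unfolding t_def[symmetric] by simp
    also have "exp (2 * Re a * t) * x0 ^ 2 = 2"
    proof -
      have "exp (2 * Re a * t) = exp (Re a * t)^2"
        using exp_of_nat_mult[of 2 "Re a * t"] by (simp add: mult.assoc)
      then have "exp (2 * Re a * t) * x0 ^ 2 = 2 * (exp (Re a * t) * exp (- Re a * t))^2"
        by (simp add: x0_def power_mult_distrib)
      also have "exp (Re a * t) * exp (- Re a * t) = 1" by (simp add: exp_minus_inverse)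
      finally show ?thesis by simp
    qed
    finally show ?thesis by simp
  qed
  define eb where "eb = cmod (exp (b * complex_of_real t))"
  have eb: "eb > 0" by (simp add: eb_def)
  have zAR: "(\<lambda>x. 0::complex) \<in> AR" by (rule AR_entire[of "\<lambda>z. 0", simplified])
  obtain W where W: "AR_zero_nbhd W" and WV: "\<And>h. h \<in> W \<Longrightarrow>
      (\<lambda>x. T t (\<lambda>y. 0 + h y) x - T t (\<lambda>x. 0) x) \<in> {f\<in>AR. cmod (f x0) < eb}"
  proof -
    have cl: "\<forall>f\<in>AR. \<forall>V. AR_zero_nbhd V \<longrightarrow>
        (\<exists>W. AR_zero_nbhd W \<and> (\<forall>h\<in>W. (\<lambda>x. T t (\<lambda>y. f y + h y) x - T t f x) \<in> V))"
      using T_cl[OF C0 gen t] unfolding AR_continuous_linear_def by blast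
    have "\<exists>W. AR_zero_nbhd W \<and> (\<forall>h\<in>W. (\<lambda>x. T t (\<lambda>y. 0 + h y) x - T t (\<lambda>x. 0) x) \<in> {f\<in>AR. cmod (f x0) < eb})"
      using mp[OF spec[OF bspec[OF cl zAR]] eval_nbhd[OF eb, of x0]] .
    then show ?thesis using that by blast
  qed
  have WT: "cmod (T t h x0) < eb" if "h \<in> W" for h
    using WV[OF that] T_zero[OF C0 gen t] by simp
  define U0 where "U0 = {z. Im z < 1/2} \<inter> {z. Im z > - 1/2}"
  have U0: "open U0" "range complex_of_real \<subseteq> U0"
    unfolding U0_def by (intro open_Int open_halfspace_Im_lt open_halfspace_Im_gt) auto
  obtain K \<epsilon> where K: "compact K" "K \<subseteq> U0" and \<epsilon>: "\<epsilon> > 0" and KW: "\<And>g. g holomorphic_on U0 \<Longrightarrow>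
      (\<forall>z\<in>K. cmod (g z) < \<epsilon>) \<Longrightarrow> (\<lambda>x. g (complex_of_real x)) \<in> W"
  proof -
    have X: "\<forall>U. open U \<and> range complex_of_real \<subseteq> U \<longrightarrow>
        (\<exists>K \<epsilon>. compact K \<and> K \<subseteq> U \<and> \<epsilon> > 0 \<and>
           (\<forall>g. g holomorphic_on U \<and> (\<forall>z\<in>K. cmod (g z) < \<epsilon>) \<longrightarrow>
                 (\<lambda>x. g (complex_of_real x)) \<in> W))"
      using W unfolding AR_zero_nbhd_def by (rule conjunct2[OF conjunct2[OF conjunct2]])
    obtain K \<epsilon> where k1: "compact K" "K \<subseteq> U0" "\<epsilon> > 0" and KW0: "\<forall>g. g holomorphic_on U0 \<and> (\<forall>z\<in>K. cmod (g z) < \<epsilon>) \<longrightarrow>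
                 (\<lambda>x. g (complex_of_real x)) \<in> W"
      using mp[OF spec[OF X, of U0] conjI[OF U0]] by (elim exE conjE)
    have KW1: "\<And>g. g holomorphic_on U0 \<Longrightarrow>
      (\<forall>z\<in>K. cmod (g z) < \<epsilon>) \<Longrightarrow> (\<lambda>x. g (complex_of_real x)) \<in> W" using KW0 by blast
    show ?thesis by (rule that[OF k1 KW1])
  qed
  obtain R where R: "\<And>z. z \<in> K \<Longrightarrow> norm z \<le> R"
    using compact_imp_bounded[OF K(1)] unfolding bounded_iff by blast
  define M where "M = 1 + R^2"
  define N where "N = 2 * M^2 + 1"
  have "M^2 \<ge> 0" by simp
  then have Np: "N > 0" unfolding N_def by linarith
  obtain j where j: "(1 - 1/N) ^ j < \<epsilon>" using real_arch_pow_inv[OF \<epsilon>, of "1 - 1/N"] Np by auto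
  define A where "A = complex_of_real (1 - 1/N)"
  define B where "B = complex_of_real (- 1/N)"
  have AB: "A + B * z ^ 2 = 1 - (1 + z^2) / complex_of_real N" for z
    by (simp add: A_def B_def diff_divide_distrib add_divide_distrib) 
  define P where "P z = (A + B * z ^ 2) ^ (2 * j)" for z
  have "(\<lambda>x. P (complex_of_real x)) \<in> W"
  proof (rule KW)
    show "P holomorphic_on U0" unfolding P_def by (intro holomorphic_intros)
    show "\<forall>z\<in>K. cmod (P z) < \<epsilon>"
    proof
      fix z assume z: "z \<in> K"
      have "z \<in> U0" using z K(2) by auto
      then have y: "\<bar>Im z\<bar> < 1/2" unfolding U0_def by auto
      have "cmod (1 + z^2) \<le> 1 + cmod z ^ 2" using norm_triangle_ineq[of 1 "z^2"] by (simp add: norm_power)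
      also have "\<dots> \<le> M" unfolding M_def using R[OF z] by (simp add: power_mono)
      finally have "cmod (A + B * z ^ 2) ^ 2 \<le> 1 - 1 / N"
        unfolding AB by (rule key_ineq[OF y]) (simp add: N_def)
      then have "cmod (P z) \<le> (1 - 1/N) ^ j"
        unfolding P_def norm_power power_mult by (intro power_mono) auto
      then show "cmod (P z) < \<epsilon>" using j by simp
    qed
  qed
  from WT[OF this] have lt: "cmod (T t (\<lambda>x. P (complex_of_real x)) x0) < eb" .
  have "T t (\<lambda>x. P (complex_of_real x)) x0 = exp (b * complex_of_real t) * (A + B * (-2)) ^ (2 * j)"
    unfolding P_def using T_quad[OF C0 gen t, of A B "2*j" x0] w2 by simp
  also have "A + B * (-2) = complex_of_real (1 + 1/N)" by (simp add: A_def B_def)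
  finally have eq: "T t (\<lambda>x. P (complex_of_real x)) x0 = exp (b * complex_of_real t) * complex_of_real (1 + 1/N) ^ (2 * j)" .
  have n1: "cmod (complex_of_real (1 + 1/N)) = 1 + 1/N"
    unfolding norm_of_real using Np by (intro abs_of_pos) (simp add: add_pos_pos)
  have "cmod (T t (\<lambda>x. P (complex_of_real x)) x0) = eb * (1 + 1/N) ^ (2 * j)"
    unfolding eq norm_mult norm_power n1 eb_def ..
  moreover have "eb * (1 + 1/N) ^ (2 * j) \<ge> eb" using eb Np by (simp add: one_le_power)
  ultimately show False using lt by simp
qed

end




definition TE :: "real \<Rightarrow> complex \<Rightarrow> real \<Rightarrow> (real \<Rightarrow> complex) \<Rightarrow> (real \<Rightarrow> complex)" where
  "TE r b t f = (\<lambda>x. exp (b * complex_of_real t) * f (exp (r * t) * x))"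

lemma open_scaled:
  assumes S: "compact S" and U: "open U"
  shows "open {z::complex. \<forall>s\<in>S. complex_of_real (exp (r * s)) * z \<in> U}"
proof -
  define C where "C = (\<lambda>p::real \<times> complex. complex_of_real (exp (r * fst p)) * snd p) -` (- U)"
  have "closed C" unfolding C_def
    by (intro continuous_closed_vimage) (use U in \<open>auto intro!: continuous_intros\<close>)
  then have "closed {z. \<exists>s. s \<in> S \<and> (s, z) \<in> C}"
    by (intro closed_compact_projection[OF S])
  moreover have "- {z::complex. \<forall>s\<in>S. complex_of_real (exp (r * s)) * z \<in> U} = {z. \<exists>s. s \<in> S \<and> (s, z) \<in> C}"
    by (auto simp: C_def)
  ultimately have "closed (- {z::complex. \<forall>s\<in>S. complex_of_real (exp (r * s)) * z \<in> U})" by simp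
  then show ?thesis by (simp add: closed_def)
qed

lemma real_in_scaled:
  assumes "range complex_of_real \<subseteq> U"
  shows "range complex_of_real \<subseteq> {z::complex. \<forall>s\<in>S. complex_of_real (exp (r * s)) * z \<in> U}"
proof -
  have "complex_of_real (exp (r * s)) * complex_of_real x \<in> U" for s x
  proof -
    have "complex_of_real (exp (r * s) * x) \<in> U" using assms rangeI[of complex_of_real "exp (r * s) * x"] by blast
    then show ?thesis by simp
  qed
  then show ?thesis by auto
qed

lemma TE_holo:
  assumes "g holomorphic_on U" "\<forall>s\<in>S. \<forall>z\<in>V. complex_of_real (exp (r * s)) * z \<in> U" "t \<in> S"
  shows "(\<lambda>z. exp (b * complex_of_real t) * g (complex_of_real (exp (r * t)) * z)) holomorphic_on V"
proof -
  have "(g \<circ> (\<lambda>z. complex_of_real (exp (r * t)) * z)) holomorphic_on V"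
    by (rule holomorphic_on_compose_gen[OF _ assms(1)]) (use assms in \<open>auto intro!: holomorphic_intros\<close>)
  then show ?thesis by (auto intro!: holomorphic_intros simp: o_def)
qed

lemma TE_AR:
  assumes f: "f \<in> AR" shows "TE r b t f \<in> AR"
proof -
  obtain U g where U: "open U" "range complex_of_real \<subseteq> U" "g holomorphic_on U"
     "\<And>x. g (complex_of_real x) = f x" using AR_E[OF f] by metis
  define V where "V = {z::complex. \<forall>s\<in>{t}. complex_of_real (exp (r * s)) * z \<in> U}"
  have "(\<lambda>x. (\<lambda>z. exp (b * complex_of_real t) * g (complex_of_real (exp (r * t)) * z)) (complex_of_real x)) \<in> AR"
    apply (rule AR_holo[of V])
    using open_scaled[where S="{t}" and U=U and r=r] U(1) real_in_scaled[OF U(2), of "{t}" r]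
      TE_holo[OF U(3), of "{t}" V r t b] by (auto simp: V_def)
  moreover have "(\<lambda>x. (\<lambda>z. exp (b * complex_of_real t) * g (complex_of_real (exp (r * t)) * z)) (complex_of_real x)) = TE r b t f"
    unfolding TE_def by (auto simp: U(4) of_real_mult[symmetric] simp del: of_real_mult)
  ultimately show ?thesis by simp
qed

lemma TE_semi: "TE r b t (TE r b s f) = TE r b (t + s) f"
  unfolding TE_def by (auto simp: algebra_simps exp_add)

lemma TE_0: "TE r b 0 f = f" unfolding TE_def by simp

lemma TE_cl: "AR_continuous_linear (TE r b t)"
  unfolding AR_continuous_linear_def
proof (intro conjI ballI allI impI)
  fix f V assume f: "f \<in> AR" and V: "AR_zero_nbhd V"
  define W where "W = {h\<in>AR. TE r b t h \<in> V}"
  have "AR_zero_nbhd W" unfolding AR_zero_nbhd_def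
  proof (intro conjI ballI allI impI)
    show "W \<subseteq> AR" by (auto simp: W_def)
  next
    fix h1 h2 and u :: real assume h: "h1 \<in> W" "h2 \<in> W" "0 \<le> u \<and> u \<le> 1"
    have "TE r b t (\<lambda>x. complex_of_real u * h1 x + complex_of_real (1 - u) * h2 x) =
      (\<lambda>x. complex_of_real u * TE r b t h1 x + complex_of_real (1 - u) * TE r b t h2 x)"
      unfolding TE_def by (auto simp: algebra_simps)
    then show "(\<lambda>x. complex_of_real u * h1 x + complex_of_real (1 - u) * h2 x) \<in> W"
      using h V unfolding W_def AR_zero_nbhd_def by (auto intro!: AR_add AR_cmult)
  next
    fix h c assume h: "h \<in> W" and c: "cmod (c::complex) \<le> 1"
    have "TE r b t (\<lambda>x. c * h x) = (\<lambda>x. c * TE r b t h x)"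
      unfolding TE_def by (auto simp: algebra_simps)
    then show "(\<lambda>x. c * h x) \<in> W"
      using h V c unfolding W_def AR_zero_nbhd_def by (auto intro!: AR_cmult)
  next
    fix U :: "complex set" assume U: "open U \<and> range complex_of_real \<subseteq> U"
    define U' where "U' = {z::complex. \<forall>s\<in>{t}. complex_of_real (exp (r * s)) * z \<in> U}"
    have U': "open U' \<and> range complex_of_real \<subseteq> U'"
      using open_scaled[where S="{t}" and U=U and r=r] real_in_scaled[of U "{t}" r] U by (auto simp: U'_def)
    have X: "\<forall>U. open U \<and> range complex_of_real \<subseteq> U \<longrightarrow>
        (\<exists>K \<epsilon>. compact K \<and> K \<subseteq> U \<and> \<epsilon> > 0 \<and>
           (\<forall>g. g holomorphic_on U \<and> (\<forall>z\<in>K. cmod (g z) < \<epsilon>) \<longrightarrow>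
                 (\<lambda>x. g (complex_of_real x)) \<in> V))"
      using V unfolding AR_zero_nbhd_def by (rule conjunct2[OF conjunct2[OF conjunct2]])
    obtain K \<epsilon> where K: "compact K" "K \<subseteq> U'" "\<epsilon> > 0" and KV: "\<forall>g. g holomorphic_on U' \<and> (\<forall>z\<in>K. cmod (g z) < \<epsilon>) \<longrightarrow>
                 (\<lambda>x. g (complex_of_real x)) \<in> V"
      using mp[OF spec[OF X, of U'] U'] by (elim exE conjE)
    define c where "c = complex_of_real (exp (r * t))"
    define eb where "eb = cmod (exp (b * complex_of_real t))"
    have eb: "eb > 0" by (simp add: eb_def)
    show "\<exists>K \<epsilon>. compact K \<and> K \<subseteq> U \<and> 0 < \<epsilon> \<and>
              (\<forall>g. g holomorphic_on U \<and> (\<forall>z\<in>K. cmod (g z) < \<epsilon>) \<longrightarrow>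
                   (\<lambda>x. g (complex_of_real x)) \<in> W)"
    proof (intro exI conjI allI impI)
      show "compact ((\<lambda>z. c * z) ` K)" using K(1) by (intro compact_continuous_image) (auto intro!: continuous_intros)
      show "(\<lambda>z. c * z) ` K \<subseteq> U" using K(2) by (auto simp: U'_def c_def)
      show "0 < \<epsilon> / eb" using K(3) eb by simp
      fix g assume g: "g holomorphic_on U \<and> (\<forall>z\<in>(\<lambda>z. c * z) ` K. cmod (g z) < \<epsilon> / eb)"
      have gAR: "(\<lambda>x. g (complex_of_real x)) \<in> AR" using g U by (intro AR_holo[of U]) auto
      define G where "G z = exp (b * complex_of_real t) * g (c * z)" for z
      have "G holomorphic_on U'" unfolding G_def c_def
        by (rule TE_holo[of g U "{t}"]) (use g in \<open>auto simp: U'_def\<close>)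
      moreover have "\<forall>z\<in>K. cmod (G z) < \<epsilon>"
      proof
        fix z assume "z \<in> K"
        then have "cmod (g (c * z)) < \<epsilon> / eb" using g by auto
        then show "cmod (G z) < \<epsilon>" using eb unfolding G_def norm_mult eb_def[symmetric]
          by (simp add: field_simps mult.commute)
      qed
      ultimately have "(\<lambda>x. G (complex_of_real x)) \<in> V" using KV by blast
      moreover have "(\<lambda>x. G (complex_of_real x)) = TE r b t (\<lambda>x. g (complex_of_real x))"
        unfolding G_def TE_def c_def by (auto simp: of_real_mult[symmetric] simp del: of_real_mult)
      ultimately show "(\<lambda>x. g (complex_of_real x)) \<in> W" using gAR by (simp add: W_def)
    qed
  qed
  moreover have "(\<lambda>x. TE r b t (\<lambda>y. f y + h y) x - TE r b t f x) = TE r b t h" for h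
    unfolding TE_def by (auto simp: algebra_simps)
  ultimately show "\<exists>W. AR_zero_nbhd W \<and> (\<forall>h\<in>W. (\<lambda>x. TE r b t (\<lambda>y. f y + h y) x - TE r b t f x) \<in> V)"
    by (auto simp: W_def)
qed (rule TE_AR, assumption | simp add: TE_def algebra_simps)+




lemma AR_zero_nbhd_U:
  assumes "AR_zero_nbhd V" "open U" "range complex_of_real \<subseteq> U"
  obtains K \<epsilon> where "compact K" "K \<subseteq> U" "\<epsilon> > 0"
    "\<And>g. g holomorphic_on U \<Longrightarrow> (\<forall>z\<in>K. cmod (g z) < \<epsilon>) \<Longrightarrow> (\<lambda>x. g (complex_of_real x)) \<in> V"
proof -
  have X: "\<forall>U. open U \<and> range complex_of_real \<subseteq> U \<longrightarrow>
        (\<exists>K \<epsilon>. compact K \<and> K \<subseteq> U \<and> \<epsilon> > 0 \<and>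
           (\<forall>g. g holomorphic_on U \<and> (\<forall>z\<in>K. cmod (g z) < \<epsilon>) \<longrightarrow>
                 (\<lambda>x. g (complex_of_real x)) \<in> V))"
    using assms(1) unfolding AR_zero_nbhd_def by (rule conjunct2[OF conjunct2[OF conjunct2]])
  obtain K \<epsilon> where k1: "compact K" "K \<subseteq> U" "\<epsilon> > 0" and KW0: "\<forall>g. g holomorphic_on U \<and> (\<forall>z\<in>K. cmod (g z) < \<epsilon>) \<longrightarrow>
                 (\<lambda>x. g (complex_of_real x)) \<in> V"
    using mp[OF spec[OF X, of U] conjI[OF assms(2,3)]] by (elim exE conjE)
  have KW1: "\<And>g. g holomorphic_on U \<Longrightarrow>
      (\<forall>z\<in>K. cmod (g z) < \<epsilon>) \<Longrightarrow> (\<lambda>x. g (complex_of_real x)) \<in> V" using KW0 by blast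
  show ?thesis by (rule that[OF k1 KW1])
qed

lemma TE_strong:
  assumes f: "f \<in> AR"
  shows "AR_tendsto (\<lambda>t. TE r b t f) (TE r b t0 f) (at t0 within {0..})"
  unfolding AR_tendsto_def
proof (intro allI impI)
  fix V assume V: "AR_zero_nbhd V"
  obtain U g where U: "open U" "range complex_of_real \<subseteq> U" and gh: "g holomorphic_on U"
     and gf: "\<And>x. g (complex_of_real x) = f x" using AR_E[OF f] by metis
  define S where "S = {t0 - 1 .. t0 + 1}"
  define U1 where "U1 = {z::complex. \<forall>s\<in>S. complex_of_real (exp (r * s)) * z \<in> U}"
  have U1: "open U1" "range complex_of_real \<subseteq> U1"
    using open_scaled[where S=S and U=U and r=r] U real_in_scaled[OF U(2), of S r]
    by (auto simp: U1_def S_def)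
  obtain K \<epsilon> where K: "compact K" "K \<subseteq> U1" "\<epsilon> > 0" and KV: "\<And>g. g holomorphic_on U1 \<Longrightarrow>
      (\<forall>z\<in>K. cmod (g z) < \<epsilon>) \<Longrightarrow> (\<lambda>x. g (complex_of_real x)) \<in> V"
    using AR_zero_nbhd_U[OF V U1] by metis
  define H where "H p = exp (b * complex_of_real (fst p)) * g (complex_of_real (exp (r * fst p)) * snd p)" for p :: "real \<times> complex"
  have "continuous_on (S \<times> K) (\<lambda>p. g (complex_of_real (exp (r * fst p)) * snd p))"
  proof (rule continuous_on_compose2[OF holomorphic_on_imp_continuous_on[OF gh]])
    show "continuous_on (S \<times> K) (\<lambda>p. complex_of_real (exp (r * fst p)) * snd p)"
      by (intro continuous_intros)
    show "(\<lambda>p. complex_of_real (exp (r * fst p)) * snd p) ` (S \<times> K) \<subseteq> U"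
      using K(2) by (auto simp: U1_def)
  qed
  then have "continuous_on (S \<times> K) H" unfolding H_def by (intro continuous_intros)
  then have "uniformly_continuous_on (S \<times> K) H"
    by (rule compact_uniformly_continuous) (auto simp: S_def K(1) intro!: compact_Times)
  then obtain d where d: "d > 0" and dH: "\<And>x x'. x \<in> S \<times> K \<Longrightarrow> x' \<in> S \<times> K \<Longrightarrow> dist x' x < d \<Longrightarrow> dist (H x') (H x) < \<epsilon>"
    unfolding uniformly_continuous_on_def using K(3) by metis
  show "eventually (\<lambda>t. (\<lambda>x. TE r b t f x - TE r b t0 f x) \<in> V) (at t0 within {0..})"
    unfolding eventually_at
  proof (intro exI[of _ "min d 1"] conjI ballI impI)
    show "0 < min d 1" using d by simp
    fix t assume t: "t \<in> {0..}" "t \<noteq> t0 \<and> dist t t0 < min d 1"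
    have tS: "t \<in> S" and t0S: "t0 \<in> S" using t by (auto simp: S_def dist_real_def)
    define G where "G z = exp (b * complex_of_real t) * g (complex_of_real (exp (r * t)) * z)
       - exp (b * complex_of_real t0) * g (complex_of_real (exp (r * t0)) * z)" for z
    have "G holomorphic_on U1" unfolding G_def
      by (intro holomorphic_on_diff TE_holo[OF gh, of S]) (use tS t0S in \<open>auto simp: U1_def\<close>)
    moreover have "\<forall>z\<in>K. cmod (G z) < \<epsilon>"
    proof
      fix z assume z: "z \<in> K"
      have "dist (H (t, z)) (H (t0, z)) < \<epsilon>"
        using dH[of "(t0, z)" "(t, z)"] tS t0S z t by (auto simp: dist_Pair_Pair)
      then show "cmod (G z) < \<epsilon>" by (simp add: G_def H_def dist_norm)
    qed
    ultimately have "(\<lambda>x. G (complex_of_real x)) \<in> V" by (rule KV)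
    moreover have "(\<lambda>x. G (complex_of_real x)) = (\<lambda>x. TE r b t f x - TE r b t0 f x)"
      unfolding G_def TE_def by (auto simp: gf[symmetric] of_real_mult[symmetric] simp del: of_real_mult)
    ultimately show "(\<lambda>x. TE r b t f x - TE r b t0 f x) \<in> V" by simp
  qed
qed




lemma TE_gen:
  assumes f: "f \<in> AR"
  shows "AR_tendsto (\<lambda>h. (\<lambda>x. (TE r b h f x - f x) / complex_of_real h)) (euler_op (complex_of_real r) b f) (at_right 0)"
  unfolding AR_tendsto_def
proof (intro allI impI)
  fix V assume V: "AR_zero_nbhd V"
  obtain U g where U: "open U" "range complex_of_real \<subseteq> U" and gh: "g holomorphic_on U"
     and gf: "\<And>x. g (complex_of_real x) = f x" using AR_E[OF f] by metis
  have fg: "f = (\<lambda>x. g (complex_of_real x))" using gf by auto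
  have vd: "vector_derivative f (at x) = deriv g (complex_of_real x)" for x
  proof -
    have "complex_of_real x \<in> U" using U(2) by auto
    from has_vector_derivative_real_field[OF holomorphic_derivI[OF gh U(1) this]]
    show ?thesis unfolding fg by (intro vector_derivative_at) simp
  qed
  define S where "S = {0::real .. 1}"
  define c where "c s = complex_of_real (exp (r * s))" for s
  define U1 where "U1 = {z::complex. \<forall>s\<in>S. c s * z \<in> U}"
  have U1: "open U1" "range complex_of_real \<subseteq> U1"
    using open_scaled[where S=S and U=U and r=r] U real_in_scaled[OF U(2), of S r]
    by (auto simp: U1_def S_def c_def)
  have U1U: "U1 \<subseteq> U" unfolding U1_def S_def c_def by force
  obtain K \<epsilon> where K: "compact K" "K \<subseteq> U1" "\<epsilon> > 0" and KV: "\<And>g. g holomorphic_on U1 \<Longrightarrow>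
      (\<forall>z\<in>K. cmod (g z) < \<epsilon>) \<Longrightarrow> (\<lambda>x. g (complex_of_real x)) \<in> V"
    using AR_zero_nbhd_U[OF V U1] by metis
  define F where "F s z = exp (b * complex_of_real s) * g (c s * z)" for s z
  define D where "D s z = exp (b * complex_of_real s) * (b * g (c s * z) + complex_of_real (r * exp (r * s)) * z * deriv g (c s * z))" for s z
  have contD: "continuous_on (S \<times> K) (\<lambda>p. D (fst p) (snd p))"
  proof -
    have inU: "(\<lambda>p. c (fst p) * snd p) ` (S \<times> K) \<subseteq> U" using K(2) by (auto simp: U1_def)
    have c1: "continuous_on (S \<times> K) (\<lambda>p. c (fst p) * snd p)" unfolding c_def by (intro continuous_intros)
    have "continuous_on (S \<times> K) (\<lambda>p. g (c (fst p) * snd p))"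
      by (rule continuous_on_compose2[OF holomorphic_on_imp_continuous_on[OF gh] c1 inU])
    moreover have "continuous_on (S \<times> K) (\<lambda>p. deriv g (c (fst p) * snd p))"
      by (rule continuous_on_compose2[OF holomorphic_on_imp_continuous_on[OF holomorphic_deriv[OF gh U(1)]] c1 inU])
    ultimately show ?thesis unfolding D_def by (intro continuous_intros)
  qed
  then have "uniformly_continuous_on (S \<times> K) (\<lambda>p. D (fst p) (snd p))"
    by (rule compact_uniformly_continuous) (auto simp: S_def K(1) intro!: compact_Times)
  then obtain d where d: "d > 0" and dD: "\<And>x x'. x \<in> S \<times> K \<Longrightarrow> x' \<in> S \<times> K \<Longrightarrow> dist x' x < d \<Longrightarrow>
      dist (D (fst x') (snd x')) (D (fst x) (snd x)) < \<epsilon> / 2"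
    unfolding uniformly_continuous_on_def using K(3) by (metis half_gt_zero)
  have derF: "((\<lambda>s. F s z) has_vector_derivative D s z) (at s within T)" if z: "z \<in> U1" and s: "s \<in> S" for z s T
  proof -
    have cs: "c s * z \<in> U" using z s by (auto simp: U1_def)
    have ce: "c w = exp (complex_of_real r * complex_of_real w)" for w
      by (simp only: c_def of_real_exp of_real_mult)
    have dg: "(g has_field_derivative deriv g (c s * z)) (at (exp (complex_of_real r * complex_of_real s) * z))"
      using holomorphic_derivI[OF gh U(1) cs] by (simp add: ce)
    have inner: "((\<lambda>w. exp (complex_of_real r * w) * z) has_field_derivative
        (complex_of_real r * exp (complex_of_real r * complex_of_real s) * z)) (at (complex_of_real s))"
      by (auto intro!: derivative_eq_intros)
    have comp: "((\<lambda>w. g (exp (complex_of_real r * w) * z)) has_field_derivative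
        deriv g (c s * z) * (complex_of_real r * exp (complex_of_real r * complex_of_real s) * z)) (at (complex_of_real s))"
      by (rule DERIV_chain2[OF dg inner])
    have ex: "((\<lambda>w. exp (b * w)) has_field_derivative b * exp (b * complex_of_real s)) (at (complex_of_real s))"
      by (auto intro!: derivative_eq_intros)
    have "((\<lambda>w. exp (b * w) * g (exp (complex_of_real r * w) * z)) has_field_derivative
        (b * exp (b * complex_of_real s) * g (exp (complex_of_real r * complex_of_real s) * z) +
         deriv g (c s * z) * (complex_of_real r * exp (complex_of_real r * complex_of_real s) * z) * exp (b * complex_of_real s)))
        (at (complex_of_real s))"
      by (rule DERIV_mult[OF ex comp])
    from has_vector_derivative_real_field[OF this, of T]
    show ?thesis unfolding F_def D_def
      by (simp add: ce algebra_simps of_real_exp)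
  qed
  show "eventually (\<lambda>h. (\<lambda>x. (TE r b h f x - f x) / complex_of_real h - euler_op (complex_of_real r) b f x) \<in> V) (at_right 0)"
    unfolding eventually_at_right_field
  proof (intro exI[of _ "min d 1"] conjI allI impI)
    show "0 < min d 1" using d by simp
  next
    fix h :: real assume h: "0 < h" "h < min d 1"
    have hS: "h \<in> S" using h by (auto simp: S_def)
    define Q where "Q z = (F h z - g z) / complex_of_real h - (complex_of_real r * z * deriv g z + b * g z)" for z
    have h1: "(\<lambda>z. exp (b * complex_of_real h) * g (c h * z)) holomorphic_on U1"
      unfolding c_def by (rule TE_holo[OF gh, of S]) (use hS in \<open>auto simp: U1_def c_def\<close>)
    have h2: "g holomorphic_on U1" using holomorphic_on_subset[OF gh U1U] .
    have h3: "deriv g holomorphic_on U1" using holomorphic_on_subset[OF holomorphic_deriv[OF gh U(1)] U1U] .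
    have hF: "(\<lambda>z. F h z) holomorphic_on U1" unfolding F_def using h1 .
    have "Q holomorphic_on U1" unfolding Q_def
      by (intro holomorphic_intros hF h2 h3) (use h U1(1) in auto)
    moreover have "\<forall>z\<in>K. cmod (Q z) < \<epsilon>"
    proof
      fix z assume z: "z \<in> K"
      have zU1: "z \<in> U1" using z K(2) by auto
      have B: "norm (D s z - D 0 z) \<le> \<epsilon> / 2" if s: "s \<in> {0..h}" for s
      proof -
        have "dist (D s z) (D 0 z) < \<epsilon> / 2"
          using dD[of "(0, z)" "(s, z)"] s h z by (auto simp: S_def dist_Pair_Pair)
        then show ?thesis by (simp add: dist_norm)
      qed
      have "norm (F h z - F 0 z - (h - 0) *\<^sub>R D 0 z) \<le> norm (h - 0) * (\<epsilon> / 2)"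
      proof (rule vector_differentiable_bound_linearization[where f="\<lambda>s. F s z" and f'="\<lambda>s. D s z" and S="{0..h}" and a=0 and b=h and B="\<epsilon>/2"])
        fix s assume "s \<in> {0..h}"
        then have "s \<in> S" using h by (auto simp: S_def)
        then show "((\<lambda>s. F s z) has_vector_derivative D s z) (at s within {0..h})" by (rule derF[OF zU1])
      next
        show "closed_segment 0 h \<subseteq> {0..h}" using h by (simp add: closed_segment_eq_real_ivl)
      next
        show "0 \<in> {0..h}" using h by simp
      qed (rule B)
      then have "norm (F h z - F 0 z - h *\<^sub>R D 0 z) \<le> h * (\<epsilon> / 2)" using h by simp
      moreover have "Q z = (F h z - F 0 z - h *\<^sub>R D 0 z) / complex_of_real h"
        using h unfolding Q_def F_def D_def c_def by (simp add: field_simps scaleR_conv_of_real)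
      ultimately have "cmod (Q z) \<le> \<epsilon> / 2" using h
        by (simp add: norm_divide divide_le_eq mult.commute)
      then show "cmod (Q z) < \<epsilon>" using K(3) by simp
    qed
    ultimately have "(\<lambda>x. Q (complex_of_real x)) \<in> V" by (rule KV)
    moreover have "(\<lambda>x. Q (complex_of_real x)) = (\<lambda>x. (TE r b h f x - f x) / complex_of_real h - euler_op (complex_of_real r) b f x)"
      unfolding Q_def F_def TE_def euler_op_def vd c_def
      by (auto simp: gf[symmetric] of_real_mult[symmetric] simp del: of_real_mult)
    ultimately show "(\<lambda>x. (TE r b h f x - f x) / complex_of_real h - euler_op (complex_of_real r) b f x) \<in> V" by simp
  qed
qed



theorem mainTheorem6:
  fixes a b :: complex
  shows "generates_C0 (euler_op a b) \<longleftrightarrow> a \<in> \<real>"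
proof
  assume "generates_C0 (euler_op a b)"
  then obtain T where C0: "C0_semigroup T" and gen: "\<forall>f\<in>AR. AR_tendsto (\<lambda>t. (\<lambda>x. (T t f x - f x) / complex_of_real t)) (euler_op a b f) (at_right 0)"
    unfolding generates_C0_def by blast
  show "a \<in> \<real>" using not_real_False[OF C0 gen] by blast
next
  assume "a \<in> \<real>"
  then have a: "euler_op a b = euler_op (complex_of_real (Re a)) b"
    by (simp add: complex_is_Real_iff complex_eq_iff)
  show "generates_C0 (euler_op a b)" unfolding generates_C0_def
  proof (intro exI conjI)
    show "C0_semigroup (TE (Re a) b)" unfolding C0_semigroup_def
      using TE_cl TE_semi TE_0 TE_strong by auto
    show "\<forall>f\<in>AR. AR_tendsto (\<lambda>t. (\<lambda>x. (TE (Re a) b t f x - f x) / complex_of_real t)) (euler_op a b f) (at_right 0)"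
      unfolding a using TE_gen by blast
  qed
qed

end
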